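(* Let $N\ge3$, $p>1$, and assume $A$ satisfies $(h_0)$–$(h_2)$ and $g$ satisfies $(g_0)$–$(g_1)$ (see context). Then there exist constants $b_1,b_2>0$ such that $\mathcal J(u)\ge b_1\|u\|_W^p-b_2\|u\|_W^q$ for all $u\in X$. Hence $\mathcal J$ is bounded from below on $X$: $\mathcal J(u)\ge\alpha$ for all $u\in X$, where $\alpha=\min_{s\ge0}(b_1s^p-b_2s^q)$.
   Context: $X=W^{1,p}(\mathbb R^N)\cap L^\infty(\mathbb R^N)$, $\|u\|_W=(|\nabla u|_p^p+|u|_p^p)^{1/p}$. $A_t=\partial A/\partial t$, $a=\nabla_\xi A$, $G(x,t)=\int_0^tg(x,s)ds$, $\mathcal J(u)=\int_{\mathbb R^N}A(x,u,\nabla u)dx+\frac1p\int_{\mathbb R^N}|u|^pdx-\int_{\mathbb R^N}G(x,u)dx$. $(h_0)$ $A(\cdot,t,\xi)$ measurable for all $(t,\xi)$, $A(x,\cdot,\cdot)$ $C^1$ for a.e. $x$. $(h_1)$ there are positive continuous $\Phi_i,\phi_i:\mathbb R\to\mathbb R$, $i=0,1,2$, with, for a.e. $x$ and all $(t,\xi)$: $|A|\le\Phi_0(t)|t|^p+\phi_0(t)|\xi|^p$, $|A_t|\le\Phi_1(t)|t|^{p-1}+\phi_1(t)|\xi|^p$, $|a|\le\Phi_2(t)|t|^{p-1}+\phi_2(t)|\xi|^{p-1}$. $(h_2)$ $A(x,t,\xi)\ge\alpha_0|\xi|^p$ a.e. $x$, all $(t,\xi)$, for some $\alpha_0>0$.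 $(g_0)$ $g$ is Carathéodory. $(g_1)$ there are $1<q<p$ and $\eta\in L^{p/(p-q)}(\mathbb R^N)$ with $0\le g(x,t)t\le\eta(x)|t|^q$ a.e. $x$, all $t$. *)

theory Defs
  imports "HOL-Analysis.Analysis"
begin

text \<open>Functions on R^N are modelled on a Euclidean space 'a with DIM('a) = N,
  equipped with Lebesgue measure.\<close>

text \<open>C^infinity real-valued functions: differentiable everywhere and all partial
  derivatives are again C^infinity (greatest fixed point).\<close>
coinductive smooth_fun :: "('a::euclidean_space \<Rightarrow> real) \<Rightarrow> bool" where
  "(\<forall>x. f differentiable (at x)) \<Longrightarrow>
   (\<forall>i\<in>Basis. smooth_fun (\<lambda>x. frechet_derivative f (at x) i)) \<Longrightarrow> smooth_fun f"

definition test_fun :: "('a::euclidean_space \<Rightarrow> real) \<Rightarrow> bool" where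
  "test_fun \<phi> \<longleftrightarrow> smooth_fun \<phi> \<and> compact (closure {x. \<phi> x \<noteq> 0})"

definition in_Lp :: "real \<Rightarrow> ('a::euclidean_space \<Rightarrow> real) \<Rightarrow> bool" where
  "in_Lp p u \<longleftrightarrow> u \<in> borel_measurable lebesgue \<and>
     integrable lebesgue (\<lambda>x. \<bar>u x\<bar> powr p)"

definition in_Linf :: "('a::euclidean_space \<Rightarrow> real) \<Rightarrow> bool" where
  "in_Linf u \<longleftrightarrow> u \<in> borel_measurable lebesgue \<and> (\<exists>C. AE x in lebesgue. \<bar>u x\<bar> \<le> C)"

definition weak_gradient :: "('a::euclidean_space \<Rightarrow> real) \<Rightarrow> ('a \<Rightarrow> 'a) \<Rightarrow> bool" where
  "weak_gradient u v \<longleftrightarrow> v \<in> borel_measurable lebesgue \<and>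
     (\<forall>\<phi>. test_fun \<phi> \<longrightarrow> (\<forall>i\<in>Basis.
        integral\<^sup>L lebesgue (\<lambda>x. u x * frechet_derivative \<phi> (at x) i)
        = - integral\<^sup>L lebesgue (\<lambda>x. (v x \<bullet> i) * \<phi> x)))"

definition sobolev_W1p :: "real \<Rightarrow> ('a::euclidean_space \<Rightarrow> real) \<Rightarrow> ('a \<Rightarrow> 'a) \<Rightarrow> bool" where
  "sobolev_W1p p u v \<longleftrightarrow> in_Lp p u \<and> weak_gradient u v \<and> in_Lp p (\<lambda>x. norm (v x))"

definition W_norm :: "real \<Rightarrow> ('a::euclidean_space \<Rightarrow> real) \<Rightarrow> ('a \<Rightarrow> 'a) \<Rightarrow> real" where
  "W_norm p u v = ((\<integral>x. norm (v x) powr p \<partial>lebesgue) + (\<integral>x. \<bar>u x\<bar> powr p \<partial>lebesgue)) powr (1/p)"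

text \<open>G(x,t) = int_0^t g(x,s) ds (oriented integral).\<close>
definition primG :: "('a \<Rightarrow> real \<Rightarrow> real) \<Rightarrow> 'a \<Rightarrow> real \<Rightarrow> real" where
  "primG g x t = (LBINT s=0..t. g x s)"

definition J_functional :: "real \<Rightarrow> ('a::euclidean_space \<Rightarrow> real \<Rightarrow> 'a \<Rightarrow> real) \<Rightarrow>
    ('a \<Rightarrow> real \<Rightarrow> real) \<Rightarrow> ('a \<Rightarrow> real) \<Rightarrow> ('a \<Rightarrow> 'a) \<Rightarrow> real" where
  "J_functional p A g u v =
     (\<integral>x. A x (u x) (v x) \<partial>lebesgue) + (1/p) * (\<integral>x. \<bar>u x\<bar> powr p \<partial>lebesgue)
     - (\<integral>x. primG g x (u x) \<partial>lebesgue)"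

end

theory Submission
  imports Defs
begin


lemma caratheodory_meas:
  fixes F :: "'a::euclidean_space \<Rightarrow> 'b::{metric_space,second_countable_topology} \<Rightarrow> real"
  assumes Fm: "\<And>c. (\<lambda>x. F x c) \<in> borel_measurable lebesgue"
  and Fc: "AE x in lebesgue. continuous_on UNIV (F x)"
  and w: "w \<in> borel_measurable lebesgue"
  shows "(\<lambda>x. F x (w x)) \<in> borel_measurable lebesgue"
proof -
  obtain S where S: "\<And>i. simple_function lebesgue (S i)"
    and lim: "\<And>x. (\<lambda>i. S i x) \<longlonglongrightarrow> w x"
    using borel_measurable_implies_sequence_metric[OF w, of undefined] by auto
  have m: "(\<lambda>x. F x (S i x)) \<in> borel_measurable lebesgue" for i
  proof (rule measurable_compose_countable'[where I="S i ` space lebesgue"])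
    show "countable (S i ` space lebesgue)" using S[of i] unfolding simple_function_def
      by (simp add: countable_finite)
    show "S i \<in> lebesgue \<rightarrow>\<^sub>M count_space (S i ` space lebesgue)"
      using S[of i] unfolding simple_function_def
      by (subst measurable_count_space_eq_countable) (auto simp: countable_finite)
  qed (rule Fm)
  have "(\<lambda>x. lim (\<lambda>i. F x (S i x))) \<in> borel_measurable lebesgue"
    using m by (rule borel_measurable_lim_metric)
  moreover have "AE x in lebesgue. lim (\<lambda>i. F x (S i x)) = F x (w x)"
    using Fc
  proof eventually_elim
    case (elim x)
    have "(\<lambda>i. F x (S i x)) \<longlonglongrightarrow> F x (w x)"
      by (rule continuous_on_tendsto_compose[OF elim lim[of x]]) auto
    then show ?case by (rule limI)
  qed
  ultimately show ?thesis by (rule borel_measurable_AE)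
qed

lemma G_bound:
  fixes g :: "real \<Rightarrow> real"
  assumes H: "\<forall>t. 0 \<le> g t * t \<and> g t * t \<le> e * \<bar>t\<bar> powr q" and q: "q > 1"
  shows "(LBINT s=0..t. g s) \<le> e * \<bar>t\<bar> powr q"
proof -
  have e: "e \<ge> 0" using H[rule_format, of 1] by auto
  have pt: "\<bar>g s\<bar> \<le> e * \<bar>t\<bar> powr (q - 1)" if "s \<noteq> 0" "\<bar>s\<bar> \<le> \<bar>t\<bar>" for s
  proof -
    have "\<bar>g s\<bar> * \<bar>s\<bar> = \<bar>g s * s\<bar>" by (simp add: abs_mult)
    also have "\<dots> \<le> e * \<bar>s\<bar> powr q" using H[rule_format, of s] by auto
    also have "\<dots> = e * \<bar>s\<bar> powr (q - 1) * \<bar>s\<bar>"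
      using that by (simp add: powr_diff)
    finally have "\<bar>g s\<bar> \<le> e * \<bar>s\<bar> powr (q - 1)" using that by simp
    also have "\<dots> \<le> e * \<bar>t\<bar> powr (q - 1)"
      using that q e by (intro mult_left_mono powr_mono2) simp_all
    finally show ?thesis .
  qed
  have tq: "\<bar>t\<bar> powr (q - 1) * \<bar>t\<bar> = \<bar>t\<bar> powr q"
    by (cases "t = 0") (auto simp: powr_diff q)
  show ?thesis
  proof (cases "0 \<le> t")
    case True
    have "(LBINT s=0..t. g s) = (\<integral>s. indicator {0<..<t} s * g s \<partial>lborel)"
      using True by (simp add: interval_lebesgue_integral_def set_lebesgue_integral_def zero_ereal_def)
    also have "\<dots> \<le> (\<integral>s. indicator {0<..<t} s * (e * \<bar>t\<bar> powr (q - 1)) \<partial>lborel)"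
    proof (rule integral_mono')
      show "integrable lborel (\<lambda>s. indicator {0<..<t} s * (e * \<bar>t\<bar> powr (q - 1)))"
        by (intro integrable_mult_left) (use True in \<open>simp add: integrable_indicator_iff emeasure_lborel_Ioo\<close>)
      fix s show "indicator {0<..<t} s * g s \<le> indicator {0<..<t} s * (e * \<bar>t\<bar> powr (q - 1))"
        using pt[of s] by (auto simp: indicator_def)
      show "0 \<le> indicator {0<..<t} s * (e * \<bar>t\<bar> powr (q - 1))" using e by auto
    qed
    also have "\<dots> = e * \<bar>t\<bar> powr q" using True tq by (simp add: mult.commute)
    finally show ?thesis .
  next
    case False
    have "(LBINT s=0..t. g s) = (\<integral>s. indicator {t<..<0} s * (- g s) \<partial>lborel)"
      using False by (simp add: interval_lebesgue_integral_def set_lebesgue_integral_def zero_ereal_def)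
    also have "\<dots> \<le> (\<integral>s. indicator {t<..<0} s * (e * \<bar>t\<bar> powr (q - 1)) \<partial>lborel)"
    proof (rule integral_mono')
      show "integrable lborel (\<lambda>s. indicator {t<..<0} s * (e * \<bar>t\<bar> powr (q - 1)))"
        by (intro integrable_mult_left) (use False in \<open>simp add: integrable_indicator_iff emeasure_lborel_Ioo\<close>)
      fix s show "indicator {t<..<0} s * (- g s) \<le> indicator {t<..<0} s * (e * \<bar>t\<bar> powr (q - 1))"
        using pt[of s] by (auto simp: indicator_def)
      show "0 \<le> indicator {t<..<0} s * (e * \<bar>t\<bar> powr (q - 1))" using e by auto
    qed
    also have "\<dots> = -(t * (e * \<bar>t\<bar> powr (q - 1)))" using False by simp
    also have "\<dots> = e * (\<bar>t\<bar> powr (q - 1) * \<bar>t\<bar>)" using False by (simp add: abs_of_neg)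
    also have "\<dots> = e * \<bar>t\<bar> powr q" using tq by simp
    finally show ?thesis .
  qed
qed


lemma young_simple:
  fixes a b r :: real
  assumes "r > 1" "a \<ge> 0" "b \<ge> 0"
  shows "a * b \<le> a powr r + b powr (r / (r - 1))"
proof -
  have r': "r / (r - 1) > 1" using assms by (simp add: field_simps)
  have "1 / r + 1 / (r / (r - 1)) = 1" using assms by (simp add: field_simps)
  then have "a * b \<le> a powr r / r + b powr (r / (r - 1)) / (r / (r - 1))"
    using Youngs_inequality[OF assms(1) r'] assms by blast
  also have "\<dots> \<le> a powr r + b powr (r / (r - 1))"
    using assms r' mult_left_mono[of 1 r "a powr r"] mult_left_mono[of "r-1" r "b powr (r/(r-1))"]
    by (intro add_mono) (simp_all add: divide_le_eq)
  finally show ?thesis .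
qed

lemma bdd_below_pq:
  fixes b1 b2 p q :: real
  assumes "b1 > 0" "b2 > 0" "1 < q" "q < p"
  shows "bdd_below ((\<lambda>s. b1 * s powr p - b2 * s powr q) ` {0..})"
proof -
  define T where "T = (b2 / b1) powr (1 / (p - q))"
  have T: "T > 0" using assms by (simp add: T_def)
  have "- b2 * T powr q \<le> b1 * s powr p - b2 * s powr q" if s: "s \<ge> 0" for s
  proof (cases "s \<le> T")
    case True
    have "s powr q \<le> T powr q" using True s assms by (intro powr_mono2) auto
    moreover have "0 \<le> b1 * s powr p" using assms by simp
    moreover from calculation(1) have "b2 * s powr q \<le> b2 * T powr q" using assms by (intro mult_left_mono) auto
    ultimately show ?thesis by linarith
  next
    case False
    then have sp: "s > 0" using T by simp
    have "T powr (p - q) = b2 / b1" using assms by (simp add: T_def powr_powr)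
    moreover have "T powr (p - q) \<le> s powr (p - q)" using False T assms by (intro powr_mono2) auto
    ultimately have "b2 / b1 \<le> s powr (p - q)" by simp
    then have "b2 \<le> s powr (p - q) * b1" using assms by (simp add: pos_divide_le_eq)
    then have "b2 \<le> b1 * s powr (p - q)" by (simp add: mult.commute)
    then have "b2 * s powr q \<le> b1 * s powr (p - q) * s powr q"
      using sp by (intro mult_right_mono) auto
    also have "\<dots> = b1 * (s powr (p - q) * s powr q)" by (simp add: mult.assoc)
    also have "s powr (p - q) * s powr q = s powr p" by (simp add: powr_add[symmetric])
    finally have "0 \<le> b1 * s powr p - b2 * s powr q" by simp
    moreover have "0 \<le> b2 * T powr q" using assms by simp
    ultimately show ?thesis by linarith
  qed
  then show ?thesis unfolding bdd_below_def by blast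
qed



theorem proposition4p6:
  fixes p q :: real
    and A :: "'a::euclidean_space \<Rightarrow> real \<Rightarrow> 'a \<Rightarrow> real"
    and A_t :: "'a \<Rightarrow> real \<Rightarrow> 'a \<Rightarrow> real"
    and a :: "'a \<Rightarrow> real \<Rightarrow> 'a \<Rightarrow> 'a"
    and g :: "'a \<Rightarrow> real \<Rightarrow> real"
    and \<eta> :: "'a \<Rightarrow> real"
    and \<Phi>0 \<Phi>1 \<Phi>2 \<phi>0 \<phi>1 \<phi>2 :: "real \<Rightarrow> real"
    and \<alpha>0 :: real
  assumes N: "DIM('a) \<ge> 3"
    and p: "p > 1"
    \<comment> \<open>(h0)\<close>
    and h0_meas: "\<And>t \<xi>. (\<lambda>x. A x t \<xi>) \<in> borel_measurable lebesgue"
    and h0_C1: "AE x in lebesgue.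
          (\<forall>t \<xi>. ((\<lambda>z. A x (fst z) (snd z)) has_derivative
                    (\<lambda>h. A_t x t \<xi> * fst h + a x t \<xi> \<bullet> snd h)) (at (t, \<xi>)))
        \<and> continuous_on UNIV (\<lambda>z. A_t x (fst z) (snd z))
        \<and> continuous_on UNIV (\<lambda>z. a x (fst z) (snd z))"
    \<comment> \<open>(h1)\<close>
    and h1_cont: "continuous_on UNIV \<Phi>0" "continuous_on UNIV \<Phi>1" "continuous_on UNIV \<Phi>2"
        "continuous_on UNIV \<phi>0" "continuous_on UNIV \<phi>1" "continuous_on UNIV \<phi>2"
    and h1_pos: "\<And>t. \<Phi>0 t > 0" "\<And>t. \<Phi>1 t > 0" "\<And>t. \<Phi>2 t > 0"
        "\<And>t. \<phi>0 t > 0" "\<And>t. \<phi>1 t > 0" "\<And>t. \<phi>2 t > 0"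
    and h1: "AE x in lebesgue. \<forall>t \<xi>.
          \<bar>A x t \<xi>\<bar> \<le> \<Phi>0 t * \<bar>t\<bar> powr p + \<phi>0 t * norm \<xi> powr p
        \<and> \<bar>A_t x t \<xi>\<bar> \<le> \<Phi>1 t * \<bar>t\<bar> powr (p - 1) + \<phi>1 t * norm \<xi> powr p
        \<and> norm (a x t \<xi>) \<le> \<Phi>2 t * \<bar>t\<bar> powr (p - 1) + \<phi>2 t * norm \<xi> powr (p - 1)"
    \<comment> \<open>(h2)\<close>
    and h2: "\<alpha>0 > 0" "AE x in lebesgue. \<forall>t \<xi>. A x t \<xi> \<ge> \<alpha>0 * norm \<xi> powr p"
    \<comment> \<open>(g0) Caratheodory\<close>
    and g0_meas: "\<And>t. (\<lambda>x. g x t) \<in> borel_measurable lebesgue"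
    and g0_cont: "AE x in lebesgue. continuous_on UNIV (g x)"
    \<comment> \<open>(g1)\<close>
    and q: "1 < q" "q < p"
    and eta: "in_Lp (p / (p - q)) \<eta>"
    and g1: "AE x in lebesgue. \<forall>t. 0 \<le> g x t * t \<and> g x t * t \<le> \<eta> x * \<bar>t\<bar> powr q"
  shows "\<exists>b1 b2. b1 > 0 \<and> b2 > 0 \<and>
           (\<forall>u v. sobolev_W1p p u v \<and> in_Linf u \<longrightarrow>
              J_functional p A g u v \<ge> b1 * W_norm p u v powr p - b2 * W_norm p u v powr q) \<and>
           (\<forall>u v. sobolev_W1p p u v \<and> in_Linf u \<longrightarrow>
              J_functional p A g u v \<ge> (INF s\<in>{0..}. b1 * s powr p - b2 * s powr q))"
proof -
  define r where "r = p / (p - q)"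
  define E where "E = (\<integral>x. \<bar>\<eta> x\<bar> powr r \<partial>lebesgue)"
  define b1 where "b1 = min \<alpha>0 (1 / p)"
  define b2 where "b2 = 1 + E"
  have E0: "E \<ge> 0" unfolding E_def by simp
  have ieta: "integrable lebesgue (\<lambda>x. \<bar>\<eta> x\<bar> powr r)" using eta unfolding in_Lp_def r_def by simp
  have b1: "b1 > 0" using h2 p by (simp add: b1_def)
  have b2: "b2 > 0" using E0 by (simp add: b2_def)
  have r_eq: "r = (p / q) / (p / q - 1)" using q by (simp add: r_def field_simps)
  have pq1: "p / q > 1" using q by simp
  have A_cont: "AE x in lebesgue. continuous_on UNIV (\<lambda>z. A x (fst z) (snd z))"
    using h0_C1
  proof eventually_elim
    case (elim x)
    show ?case
    proof (intro continuous_at_imp_continuous_on ballI)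
      fix z :: "real \<times> 'a"
      obtain t \<xi> where z: "z = (t, \<xi>)" by (cases z)
      have "((\<lambda>z. A x (fst z) (snd z)) has_derivative
                    (\<lambda>h. A_t x t \<xi> * fst h + a x t \<xi> \<bullet> snd h)) (at (t, \<xi>))" using elim by blast
      then show "isCont (\<lambda>z. A x (fst z) (snd z)) z" unfolding z by (rule has_derivative_continuous)
    qed
  qed
  have main: "J_functional p A g u v \<ge> b1 * W_norm p u v powr p - b2 * W_norm p u v powr q"
    if uv: "sobolev_W1p p u v" "in_Linf u" for u v
  proof -
    have um[measurable]: "u \<in> borel_measurable lebesgue" and iu: "integrable lebesgue (\<lambda>x. \<bar>u x\<bar> powr p)"
      using uv unfolding sobolev_W1p_def in_Lp_def by auto
    have vm[measurable]: "v \<in> borel_measurable lebesgue" and iv: "integrable lebesgue (\<lambda>x. norm (v x) powr p)"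
      using uv unfolding sobolev_W1p_def in_Lp_def weak_gradient_def by auto
    obtain C where C: "AE x in lebesgue. \<bar>u x\<bar> \<le> C" using uv unfolding in_Linf_def by auto
    define V where "V = (\<integral>x. norm (v x) powr p \<partial>lebesgue)"
    define Y where "Y = (\<integral>x. \<bar>u x\<bar> powr p \<partial>lebesgue)"
    have V0: "V \<ge> 0" and Y0: "Y \<ge> 0" unfolding V_def Y_def by simp_all
    have IA: "(\<integral>x. A x (u x) (v x) \<partial>lebesgue) \<ge> \<alpha>0 * V"
    proof -
      have Am: "(\<lambda>x. A x (u x) (v x)) \<in> borel_measurable lebesgue"
        using caratheodory_meas[of "\<lambda>x z. A x (fst z) (snd z)", OF h0_meas A_cont, of "\<lambda>x. (u x, v x)"]
        by simp
      have "compact (\<Phi>0 ` {-C..C})"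
        by (intro compact_continuous_image continuous_on_subset[OF h1_cont(1)]) auto
      then obtain B0 where B0: "\<forall>t\<in>{-C..C}. \<bar>\<Phi>0 t\<bar> \<le> B0"
        using compact_imp_bounded bounded_real by force
      have "compact (\<phi>0 ` {-C..C})"
        by (intro compact_continuous_image continuous_on_subset[OF h1_cont(4)]) auto
      then obtain B1 where B1: "\<forall>t\<in>{-C..C}. \<bar>\<phi>0 t\<bar> \<le> B1"
        using compact_imp_bounded bounded_real by force
      have bound: "AE x in lebesgue. norm (A x (u x) (v x)) \<le> norm (B0 * \<bar>u x\<bar> powr p + B1 * norm (v x) powr p)"
        using h1 C
      proof eventually_elim
        case (elim x)
        have ux: "u x \<in> {-C..C}" using elim(2) by auto
        have P0: "\<Phi>0 (u x) \<le> B0" "\<phi>0 (u x) \<le> B1" using B0 B1 ux by force+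
        have "\<bar>A x (u x) (v x)\<bar> \<le> \<Phi>0 (u x) * \<bar>u x\<bar> powr p + \<phi>0 (u x) * norm (v x) powr p"
          using elim(1) by blast
        also have "\<dots> \<le> B0 * \<bar>u x\<bar> powr p + B1 * norm (v x) powr p"
          using P0 by (intro add_mono mult_right_mono) auto
        finally have *: "\<bar>A x (u x) (v x)\<bar> \<le> B0 * \<bar>u x\<bar> powr p + B1 * norm (v x) powr p" .
        then have "0 \<le> B0 * \<bar>u x\<bar> powr p + B1 * norm (v x) powr p" by linarith
        then show ?case using * by simp
      qed
      have intA: "integrable lebesgue (\<lambda>x. A x (u x) (v x))"
        by (rule Bochner_Integration.integrable_bound[OF _ Am bound]) (use iu iv in simp)
      have "(\<integral>x. \<alpha>0 * norm (v x) powr p \<partial>lebesgue) \<le> (\<integral>x. A x (u x) (v x) \<partial>lebesgue)"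
        using h2(2) by (intro integral_mono_AE integrable_mult_right iv intA) (auto elim: AE_mp)
      then show ?thesis by (simp add: V_def)
    qed
    have IG: "(\<integral>x. primG g x (u x) \<partial>lebesgue) \<le> b2 * Y powr (q / p)"
    proof -
      have Gpt: "AE x in lebesgue. primG g x (u x) \<le> \<eta> x * \<bar>u x\<bar> powr q \<and> \<eta> x \<ge> 0"
        using g1
      proof eventually_elim
        case (elim x)
        have "\<eta> x \<ge> 0" using elim[rule_format, of 1] by auto
        then show ?case unfolding primG_def using G_bound[OF elim q(1)] by blast
      qed
      have u0: "AE x in lebesgue. Y = 0 \<longrightarrow> u x = 0"
      proof (cases "Y = 0")
        case True
        then have "AE x in lebesgue. \<bar>u x\<bar> powr p = 0"
          using integral_nonneg_eq_0_iff_AE[OF iu] unfolding Y_def by simp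
        then show ?thesis by eventually_elim simp
      qed simp
      define R where "R x = Y powr (q / p) * (\<bar>u x\<bar> powr p / Y + \<bar>\<eta> x\<bar> powr r)" for x
      have I1: "integrable lebesgue (\<lambda>x. \<bar>u x\<bar> powr p / Y + \<bar>\<eta> x\<bar> powr r)"
        using iu ieta by simp
      have iR: "integrable lebesgue R" unfolding R_def
        by (intro integrable_mult_right) (rule I1)
      have R0: "AE x in lebesgue. 0 \<le> R x" unfolding R_def using Y0 by simp
      have GR: "AE x in lebesgue. primG g x (u x) \<le> R x"
        using Gpt u0
      proof eventually_elim
        case (elim x)
        show ?case
        proof (cases "Y = 0")
          case True
          then show ?thesis using elim q by (simp add: R_def)
        next
          case False
          then have Yp: "Y > 0" using Y0 by simp
          define a where "a = \<bar>u x\<bar> powr q / Y powr (q / p)"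
          have a0: "a \<ge> 0" unfolding a_def by simp
          have "a * \<eta> x \<le> a powr (p / q) + \<eta> x powr r"
            unfolding r_eq using young_simple[OF pq1 a0] elim by simp
          moreover have "a powr (p / q) = \<bar>u x\<bar> powr p / Y"
            unfolding a_def using q Yp by (simp add: powr_divide powr_powr)
          moreover have "\<eta> x powr r = \<bar>\<eta> x\<bar> powr r" using elim by simp
          moreover have "\<eta> x * \<bar>u x\<bar> powr q = Y powr (q / p) * (a * \<eta> x)"
            unfolding a_def using Yp by simp
          ultimately have le: "a * \<eta> x \<le> \<bar>u x\<bar> powr p / Y + \<bar>\<eta> x\<bar> powr r"
            and eq: "\<eta> x * \<bar>u x\<bar> powr q = Y powr (q / p) * (a * \<eta> x)" by simp_all
          have "Y powr (q / p) * (a * \<eta> x) \<le> Y powr (q / p) * (\<bar>u x\<bar> powr p / Y + \<bar>\<eta> x\<bar> powr r)"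
            by (rule mult_left_mono[OF le]) simp
          then have "\<eta> x * \<bar>u x\<bar> powr q \<le> R x" unfolding R_def eq .
          then show ?thesis using elim by linarith
        qed
      qed
      have "(\<integral>x. primG g x (u x) \<partial>lebesgue) \<le> (\<integral>x. R x \<partial>lebesgue)"
        by (rule integral_mono_AE'[OF iR GR R0])
      also have "(\<integral>x. R x \<partial>lebesgue) = Y powr (q / p) * (Y / Y + E)"
        unfolding R_def using iu ieta by (simp add: Y_def E_def)
      also have "\<dots> \<le> Y powr (q / p) * b2"
        unfolding b2_def by (intro mult_left_mono) (auto simp: divide_le_eq_1)
      finally show ?thesis by (simp add: mult.commute)
    qed
    have J: "J_functional p A g u v \<ge> \<alpha>0 * V + (1 / p) * Y - b2 * Y powr (q / p)"
    proof -
      have "J_functional p A g u v = (\<integral>x. A x (u x) (v x) \<partial>lebesgue) + (1 / p) * Y - (\<integral>x. primG g x (u x) \<partial>lebesgue)"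
        by (simp add: J_functional_def Y_def)
      then show ?thesis using IA IG by linarith
    qed
    have Wp: "W_norm p u v powr p = V + Y" unfolding W_norm_def V_def[symmetric] Y_def[symmetric]
      using p V0 Y0 by (simp add: powr_powr)
    have Wq: "W_norm p u v powr q \<ge> Y powr (q / p)" unfolding W_norm_def V_def[symmetric] Y_def[symmetric]
    proof -
      have "Y powr (q / p) \<le> (V + Y) powr (q / p)" using p q V0 Y0 by (intro powr_mono2) auto
      then show "Y powr (q / p) \<le> ((V + Y) powr (1 / p)) powr q" by (simp add: powr_powr)
    qed
    have "b1 * (V + Y) \<le> \<alpha>0 * V + (1 / p) * Y"
    proof -
      have "b1 * V \<le> \<alpha>0 * V" unfolding b1_def using V0 by (intro mult_right_mono) auto
      moreover have "b1 * Y \<le> (1 / p) * Y" unfolding b1_def using Y0 by (intro mult_right_mono) auto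
      ultimately show ?thesis by (simp add: distrib_left)
    qed
    moreover have "b2 * Y powr (q / p) \<le> b2 * W_norm p u v powr q" using Wq b2 by simp
    ultimately show ?thesis unfolding Wp using J by linarith
  qed
  show ?thesis
  proof (intro exI conjI allI impI)
    show "b1 > 0" "b2 > 0" by (fact b1, fact b2)
    fix u :: "'a \<Rightarrow> real" and v :: "'a \<Rightarrow> 'a" assume uv: "sobolev_W1p p u v \<and> in_Linf u"
    show "J_functional p A g u v \<ge> b1 * W_norm p u v powr p - b2 * W_norm p u v powr q"
      using main uv by blast
  next
    fix u :: "'a \<Rightarrow> real" and v :: "'a \<Rightarrow> 'a" assume uv: "sobolev_W1p p u v \<and> in_Linf u"
    have W0: "W_norm p u v \<in> {0..}" unfolding W_norm_def by simp
    have "(INF s\<in>{0..}. b1 * s powr p - b2 * s powr q) \<le> b1 * W_norm p u v powr p - b2 * W_norm p u v powr q"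
      by (rule cINF_lower[OF bdd_below_pq[OF b1 b2 q] W0])
    also have "\<dots> \<le> J_functional p A g u v" using main uv by blast
    finally show "J_functional p A g u v \<ge> (INF s\<in>{0..}. b1 * s powr p - b2 * s powr q)" .
  qed
qed

end
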